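(* Let $K$ be an algebraically closed field of characteristic $0$ and let $d,n$ be integers with $1<d<n$ and $\gcd(n,d)=1$. Let $e$ be a positive integer, $m:=n+ed$, and assume $n+ed>d(de-1)$. Let $v(x)\in K[x]$ satisfy $\deg(v)<m/d$ and be such that the polynomial $(1+x)^m-v(x)^d$ has all its nonzero roots simple and has $0$ as a root of multiplicity $ed$ or $ed+1$. Then $f(x):=\dfrac{(1+x)^m-v(x)^d}{x^{ed}}$ is a polynomial of degree $n$ without repeated roots, and the corresponding curve $\mathcal{C}_{f,d}$ has a point $P\in\mathcal{C}_{f,d}(K)$ with abscissa $x(P)=-1$ whose order is $m$.
   Context: For $f(x)\in K[x]$ of degree $n$ without repeated roots, $\mathcal{C}_{f,d}$ is the smooth projective model of $y^d=f(x)$; it has a unique point at infinity $O$, and $\mathcal{C}_{f,d}\setminus\{O\}$ is identified with the affine curve $y^d=f(x)$. $\mathcal{C}_{f,d}$ is identified with its image in its Jacobian via $P\mapsto \operatorname{cl}((P)-(O))$ (linear equivalence class); $P$ has order $m$ if $\operatorname{cl}((P)-(O))$ has order $m$ in $J(\mathcal{C}_{f,d})(K)$. *)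

theory Defs
  imports "HOL-Computational_Algebra.Polynomial"
begin

definition alg_closed :: "'a::field itself \<Rightarrow> bool" where
  "alg_closed _ \<longleftrightarrow> (\<forall>p::'a poly. degree p \<ge> 1 \<longrightarrow> (\<exists>x. poly p x = 0))"

text \<open>Regular functions on the affine curve y^d = f(x) are represented by
  h(x,y) = sum_{j<d} a_j(x) y^j.  Their pole order at the unique point O at
  infinity is max_j (d * deg a_j + n * j), n = deg f (x has a pole of order d,
  y of order n at O, gcd(n,d)=1).\<close>

definition curve_fun_eval :: "nat \<Rightarrow> (nat \<Rightarrow> 'a::field poly) \<Rightarrow> 'a \<Rightarrow> 'a \<Rightarrow> 'a" where
  "curve_fun_eval d a x y = (\<Sum>j<d. poly (a j) x * y ^ j)"

definition pole_order_at_O :: "'a::field poly \<Rightarrow> nat \<Rightarrow> (nat \<Rightarrow> 'a poly) \<Rightarrow> nat" where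
  "pole_order_at_O f d a = Max {d * degree (a j) + degree f * j | j. j < d \<and> a j \<noteq> 0}"

text \<open>k(P) - k(O) is a principal divisor on C_{f,d}: there is a nonzero regular
  function on the affine part with pole of order k at O whose only affine zero is P.\<close>

definition principal_multiple :: "'a::field poly \<Rightarrow> nat \<Rightarrow> 'a \<times> 'a \<Rightarrow> nat \<Rightarrow> bool" where
  "principal_multiple f d P k \<longleftrightarrow>
     (\<exists>a::nat \<Rightarrow> 'a poly. (\<exists>j<d. a j \<noteq> 0) \<and> pole_order_at_O f d a = k \<and>
        (\<forall>x y. y ^ d = poly f x \<longrightarrow> (curve_fun_eval d a x y = 0 \<longleftrightarrow> (x, y) = P)))"

text \<open>Order of cl((P)-(O)) in the Jacobian of C_{f,d}.\<close>

definition point_order :: "'a::field poly \<Rightarrow> nat \<Rightarrow> 'a \<times> 'a \<Rightarrow> nat \<Rightarrow> bool" where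
  "point_order f d P m \<longleftrightarrow> m > 0 \<and> principal_multiple f d P m \<and>
     (\<forall>k. 0 < k \<and> k < m \<longrightarrow> \<not> principal_multiple f d P k)"

end

theory Submission
  imports Defs
begin


lemma deg_diff_left: "degree (q::'a::ring poly) < degree p \<Longrightarrow> degree (p - q) = degree p"
  using degree_add_eq_left[of "-q" p] by simp

lemma deg_diff_right: "degree (p::'a::ring poly) < degree q \<Longrightarrow> degree (p - q) = degree q"
  using degree_add_eq_right[of p "-q"] by simp

lemma alg_root:
  assumes "alg_closed TYPE('a::field)" "1 \<le> degree (p::'a poly)"
  shows "\<exists>x. poly p x = 0"
  using assms unfolding alg_closed_def by blast

lemma exists_root_pow:
  fixes a :: "'a::field"
  assumes "alg_closed TYPE('a)" "0 < d"
  shows "\<exists>y. y ^ d = a"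
proof -
  have "degree (monom 1 d - [:a:]) = d"
    using assms(2) by (simp add: degree_monom_eq deg_diff_left)
  then obtain y where "poly (monom 1 d - [:a:]) y = 0"
    using alg_root[OF assms(1), of "monom 1 d - [:a:]"] assms(2) by auto
  then show ?thesis by (auto simp: poly_monom)
qed

lemma root_of_unity:
  fixes dummy :: "'a::field_char_0"
  assumes "alg_closed TYPE('a)" "2 \<le> d"
  shows "\<exists>w::'a. w ^ d = 1 \<and> w \<noteq> 1"
proof -
  define q :: "'a poly" where "q = (\<Sum>i<d. [:0,1:] ^ i)"
  have id: "[:0,1:] ^ d - 1 = ([:0,1:] - 1) * q"
    using power_diff_sumr2[of "[:0,1::'a:]" d 1] by (simp add: q_def)
  have dX: "degree ([:0,1:] ^ d - (1::'a poly)) = d"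
    using assms(2) by (simp add: deg_diff_left degree_linear_power)
  have "[:0,1:] - (1::'a poly) = [:-1,1:]" by (simp add: one_pCons)
  hence id2: "[:0,1:] ^ d - 1 = [:-1,1:] * q" using id by simp
  have "q \<noteq> 0" using id2 dX assms(2) by auto
  hence "degree ([:0,1:] ^ d - (1::'a poly)) = 1 + degree q"
    unfolding id2 by (subst degree_mult_eq) auto
  with dX assms have "1 \<le> degree q" by simp
  then obtain w where w: "poly q w = 0" using alg_root[OF assms(1)] by blast
  have "poly ([:0,1:] ^ d - 1) w = 0" using id w by simp
  hence "w ^ d = 1" by simp
  moreover have "w \<noteq> 1"
  proof
    assume "w = 1"
    hence "poly q w = of_nat d" by (simp add: q_def poly_sum)
    with w assms show False by simp
  qed
  ultimately show ?thesis by blast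
qed

lemma only_root:
  fixes Q :: "'a::field poly"
  assumes "alg_closed TYPE('a)" "Q \<noteq> 0" "\<forall>x. poly Q x = 0 \<longrightarrow> x = a"
  shows "Q = smult (lead_coeff Q) ([:-a,1:] ^ degree Q)"
proof -
  obtain r where r: "Q = [:-a,1:] ^ order a Q * r" "\<not> [:-a,1:] dvd r"
    using order_decomp[OF assms(2)] by blast
  have "degree r = 0"
  proof (rule ccontr)
    assume "degree r \<noteq> 0"
    then obtain x where "poly r x = 0" using alg_root[OF assms(1), of r] by auto
    hence "poly Q x = 0" by (subst r(1)) simp
    hence "x = a" using assms(3) by blast
    with \<open>poly r x = 0\<close> r(2) show False by (simp add: poly_eq_0_iff_dvd)
  qed
  then obtain r0 where r0: "r = [:r0:]" by (metis degree_eq_zeroE)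
  obtain k0 where k0: "k0 = order a Q" by blast
  hence Q: "Q = smult r0 ([:-a,1:] ^ k0)" using r(1) r0 k0 by simp
  hence "r0 \<noteq> 0" using assms(2) by auto
  have "degree (smult r0 ([:-a,1:] ^ k0)) = k0" "lead_coeff (smult r0 ([:-a,1:] ^ k0)) = r0"
    using \<open>r0 \<noteq> 0\<close> lead_coeff_power[of "[:-a,1:]" k0] degree_linear_power[of "-a" k0]
    by (simp_all add: lead_coeff_smult)
  thus ?thesis using Q by metis
qed

lemma curve_eval_two:
  assumes "2 \<le> d" "\<forall>j. 2 \<le> j \<and> j < d \<longrightarrow> a j = 0"
  shows "curve_fun_eval d a x y = poly (a 0) x + poly (a 1) x * y"
proof -
  have "(\<Sum>j<d. poly (a j) x * y ^ j) = (\<Sum>j\<in>{0,1}. poly (a j) x * y ^ j)"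
    by (rule sum.mono_neutral_right) (use assms in auto)
  thus ?thesis by (simp add: curve_fun_eval_def)
qed

lemma P1_eq: "[:1,1:] = [:-(-1),1::'a::comm_ring_1:]" by simp

lemma dvd_cancel_nonroot:
  fixes W S :: "'a::field poly"
  assumes "[:1,1:]^K dvd W * S" "poly S (-1) \<noteq> 0"
  shows "[:1,1:]^K dvd W"
proof (cases "W = 0")
  case False
  have S0: "S \<noteq> 0" using assms(2) by auto
  have "K \<le> order (-1) (W * S)"
    using assms(1) False S0 unfolding P1_eq order_divides by simp
  also have "order (-1) (W * S) = order (-1) W"
    using order_mult[of W S "-1"] False S0 order_0I[OF assms(2)] by simp
  finally show ?thesis unfolding P1_eq order_divides by simp
qed simp

lemma smult_neg_pow:
  fixes B f :: "'a::comm_ring_1 poly"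
  assumes "c ^ d = - ((-1) ^ d)"
  shows "smult (c^d) ((-B)^d * f) = - (B^d * f)"
proof (cases "even d")
  case True
  then show ?thesis using assms by simp
next
  case False
  then show ?thesis using assms by simp
qed

lemma core_dvd:
  fixes A B v f :: "'a::field_char_0 poly" and c y0 \<kappa> :: 'a
  assumes dpos: "0 < d"
    and cd: "c ^ d = - ((-1) ^ d)"
    and Fx: "[:0,1:]^(e*d) * f = [:1,1:]^m - v^d"
    and Qeq: "A^d - (-B)^d * f = smult \<kappa> ([:1,1:]^K)"
    and Km: "K \<le> m"
    and B1: "poly B (-1) \<noteq> 0"
    and v1: "poly v (-1) \<noteq> 0"
    and hP: "poly A (-1) + poly B (-1) * y0 = 0"
    and gP: "c * (-1)^e * y0 = - poly v (-1)"
  shows "[:1,1:]^K dvd (smult c ([:0,1:]^e * A) - B * v)"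
proof -
  define U where "U = smult c ([:0,1:]^e * A)"
  define V where "V = B * v"
  define S where "S = (\<Sum>i<d. V^(d - Suc i) * U^i)"
  have h1: "U^d - V^d = (U - V) * S"
    unfolding S_def by (rule power_diff_sumr2)
  have Ud: "U^d = smult (c^d) ([:0,1:]^(e*d) * A^d)"
    unfolding U_def by (simp add: smult_power power_mult_distrib power_mult)
  have vd: "v^d = [:1,1:]^m - [:0,1:]^(e*d) * f" using Fx by simp
  have "U^d - V^d = [:0,1:]^(e*d) * smult (c^d) (A^d - (-B)^d * f) - B^d * [:1,1:]^m"
  proof -
    have "U^d - V^d = smult (c^d) ([:0,1:]^(e*d) * A^d) - B^d * ([:1,1:]^m - [:0,1:]^(e*d) * f)"
      unfolding Ud V_def vd[symmetric] by (simp add: power_mult_distrib)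
    also have "\<dots> = [:0,1:]^(e*d) * (smult (c^d) (A^d) - smult (c^d) ((-B)^d * f)) - B^d * [:1,1:]^m"
      unfolding smult_neg_pow[OF cd] by (simp add: algebra_simps)
    finally show ?thesis by (simp add: smult_diff_right)
  qed
  also have "\<dots> = [:1,1:]^K * ([:0,1:]^(e*d) * smult (c^d * \<kappa>) 1 - B^d * [:1,1:]^(m-K))"
    unfolding Qeq using Km by (simp add: algebra_simps power_add[symmetric])
  finally have h3: "[:1,1:]^K dvd (U - V) * S" unfolding h1 by (metis dvd_triv_left)
  have UV: "poly U (-1) = poly V (-1)"
  proof -
    have "poly A (-1) = - (poly B (-1) * y0)" using hP by (simp add: eq_neg_iff_add_eq_0)
    hence "poly U (-1) = poly B (-1) * (- (c * (-1)^e * y0))"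
      unfolding U_def by (simp add: algebra_simps)
    thus ?thesis unfolding gP V_def by simp
  qed
  have "poly S (-1) = (\<Sum>i<d. poly V (-1) ^ (d - Suc i) * poly V (-1) ^ i)"
    unfolding S_def by (simp add: poly_sum UV)
  also have "\<dots> = (\<Sum>i<d. poly V (-1) ^ (d - 1))"
    by (rule sum.cong) (auto simp: power_add[symmetric])
  also have "\<dots> = of_nat d * poly V (-1) ^ (d - 1)" by simp
  finally have "poly S (-1) \<noteq> 0" using dpos B1 v1 by (simp add: V_def)
  from dvd_cancel_nonroot[OF h3 this] show ?thesis unfolding U_def V_def .
qed

lemma X_eq: "[:0,1:] = [:-0,1::'a::comm_ring_1:]" by simp

lemma core_zero:
  fixes A B v :: "'a::field poly"
  assumes "smult c ([:0,1:]^e * A) = B * v" "degree B < e" "poly v 0 \<noteq> 0"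
  shows "B = 0"
proof (rule ccontr)
  assume B0: "B \<noteq> 0"
  have v0: "v \<noteq> 0" using assms(3) by auto
  have "[:0,1:]^e dvd B * v" unfolding assms(1)[symmetric] by (simp add: dvd_smult)
  hence "e \<le> order 0 (B * v)" using B0 v0 unfolding X_eq order_divides by simp
  also have "order 0 (B * v) = order 0 B" using order_mult[of B v 0] B0 v0 order_0I[OF assms(3)] by simp
  finally have "[:0,1:]^e dvd B" unfolding X_eq order_divides by simp
  from dvd_imp_degree_le[OF this B0] assms(2) show False by (simp add: degree_linear_power)
qed

lemma degW:
  fixes A B v :: "'a::field poly"
  shows "degree (smult c ([:0,1:]^e * A) - B * v) \<le> max (e + degree A) (degree B + degree v)"
proof -
  have "degree (smult c ([:0,1:]^e * A)) \<le> e + degree A"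
    using degree_mult_le[of "[:0,1:]^e" A] degree_smult_le[of c "[:0,1:]^e * A"]
    by (simp add: degree_linear_power)
  moreover have "degree (B * v) \<le> degree B + degree v" by (rule degree_mult_le)
  ultimately show ?thesis using degree_diff_le_max[of "smult c ([:0,1:]^e * A)" "B * v"] by linarith
qed

lemma coeff_X2_dvd:
  fixes p :: "'a::comm_ring_1 poly"
  assumes "[:0,0,1:] dvd p"
  shows "coeff p 0 = 0" "coeff p 1 = 0"
proof -
  obtain q where "p = [:0,0,1:] * q" using assms by blast
  hence "p = pCons 0 (pCons 0 q)" by simp
  thus "coeff p 0 = 0" "coeff p 1 = 0" by simp_all
qed

lemma coeff_P1_pow:
  "coeff ([:1,1::'a::comm_ring_1:]^N) 0 = 1 \<and> coeff ([:1,1::'a:]^N) 1 = of_nat N"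
proof (induction N)
  case (Suc N)
  have "[:1,1::'a:]^Suc N = [:1,1:]^N + pCons 0 ([:1,1:]^N)" by (simp add: algebra_simps)
  then show ?case using Suc by (simp add: coeff_pCons split: nat.split)
qed simp

lemma X2_dvd_Xpow: "2 \<le> j \<Longrightarrow> [:0,0,1::'a::comm_ring_1:] dvd [:0,1:]^j"
proof -
  assume "2 \<le> j"
  have "[:0,0,1::'a:] = [:0,1:]^2" by (simp add: power2_eq_square)
  thus ?thesis using \<open>2 \<le> j\<close> by (simp add: le_imp_power_dvd)
qed

lemma coprime_dvd_1: "coprime (n::nat) d \<Longrightarrow> d dvd n \<Longrightarrow> d = 1"
  using coprime_common_divisor[of n d d] by simp

lemma pow_neg_eq:
  fixes a b z :: "'a::field"
  assumes "a ^ d = (- b) ^ d * z" "b \<noteq> 0"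
  shows "(- a / b) ^ d = z"
proof -
  have "(- a) ^ d = b ^ d * z"
  proof (cases "even d")
    case True thus ?thesis using assms by simp
  next
    case False thus ?thesis using assms by simp
  qed
  have "(-a / b)^d = (-a)^d / b^d" by (rule power_divide)
  also have "\<dots> = z" using \<open>(- a) ^ d = b ^ d * z\<close> assms(2) by simp
  finally show ?thesis .
qed

lemma y0d_lemma:
  fixes c y0 pf pv s :: "'a::field"
  assumes cd: "c^d = - ((-1)^d)" and s0: "s \<noteq> 0"
    and fF: "s * pf = - (pv ^ d)"
    and cy: "c^d * s * y0^d = (- pv)^d"
  shows "y0^d = pf"
proof -
    have "s * y0^d = s * pf"
    proof (cases "even d")
      case True
      hence h: "- (s * y0 ^ d) = pv ^ d" using cy cd by simp
      have "s * y0 ^ d = - (- (s * y0 ^ d))" by simp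
      also have "\<dots> = - (pv ^ d)" by (simp only: h)
      finally show ?thesis using fF by simp
    next
      case False
      hence "c^d = 1" "(- pv)^d = - (pv ^ d)" using cd by simp_all
      hence "s * y0^d = - (pv ^ d)" using cy by simp
      thus ?thesis using fF by simp
    qed
    thus ?thesis using s0 by simp
qed

lemma no_small:
  fixes v f :: "'a::field_char_0 poly" and c y0 :: 'a
  assumes ac: "alg_closed TYPE('a)"
    and d2: "2 \<le> d" and dn: "d < n" and cop: "coprime n d" and e0: "0 < e"
    and hyp: "n + e*d > d*(d*e - 1)"
    and mdef: "m = n + e*d"
    and Fx: "[:0,1:]^(e*d) * f = [:1,1:]^m - v^d"
    and degf: "degree f = n"
    and dv: "d * degree v < m"
    and cd: "c^d = - ((-1)^d)"
    and v1: "poly v (-1) \<noteq> 0" and v0: "poly v 0 \<noteq> 0"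
    and gP: "c * (-1)^e * y0 = - poly v (-1)"
    and y0nz: "y0 \<noteq> 0" and y0d: "y0^d = poly f (-1)"
    and k0: "0 < k" and km: "k < m"
    and pm: "principal_multiple f d (-1, y0) k"
  shows False
proof -
  obtain a where anz: "\<exists>j<d. a j \<noteq> 0" and po: "pole_order_at_O f d a = k"
    and Z: "\<forall>x y. y^d = poly f x \<longrightarrow> (curve_fun_eval d a x y = 0 \<longleftrightarrow> (x,y) = (-1,y0))"
    using pm unfolding principal_multiple_def by blast
  define S where "S = {d * degree (a j) + degree f * j |j. j < d \<and> a j \<noteq> 0}"
  have finS: "finite S" unfolding S_def
    by (rule finite_subset[of _ "(\<lambda>j. d * degree (a j) + degree f * j) ` {..<d}"]) auto
  have wt: "d * degree (a j) + n * j \<le> k" if "j < d" "a j \<noteq> 0" for j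
  proof -
    have "d * degree (a j) + degree f * j \<in> S" unfolding S_def using that by blast
    hence "d * degree (a j) + degree f * j \<le> Max S" using finS by simp
    thus ?thesis using po degf unfolding pole_order_at_O_def S_def by simp
  qed
  have big: "e*d < n" if "3 \<le> d"
  proof -
    define t where "t = d * e"
    have te: "e * d = t" by (simp add: t_def mult.commute)
    have "3 * (t - 1) \<le> d * (t - 1)" using that by (rule mult_le_mono1)
    moreover have "3 \<le> t" unfolding t_def using that e0 mult_le_mono[of 3 d 1 e] by simp
    ultimately show ?thesis using hyp unfolding te t_def[symmetric] by linarith
  qed
  have high: "a j = 0" if "2 \<le> j" "j < d" for j
  proof (rule ccontr)
    assume "a j \<noteq> 0"
    hence "d * degree (a j) + n*j \<le> k" by (rule wt[OF that(2)])
    hence "n * 2 \<le> k" using that(1) mult_le_mono2[of 2 j n] by linarith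
    moreover have "e*d < n" using big that by linarith
    ultimately show False using km mdef by linarith
  qed
  define A where "A = a 0"
  define B where "B = a 1"
  have ev: "curve_fun_eval d a x y = poly A x + poly B x * y" for x y
    using curve_eval_two[OF d2] high unfolding A_def B_def by auto
  have hPz: "poly A (-1) + poly B (-1) * y0 = 0" using Z y0d ev by simp
  obtain w :: 'a where w: "w^d = 1" "w \<noteq> 1" using root_of_unity[OF ac d2] by blast
  have B1: "poly B (-1) \<noteq> 0"
  proof
    assume B1: "poly B (-1) = 0"
    hence A1: "poly A (-1) = 0" using hPz by simp
    have "(w*y0)^d = poly f (-1)" using w y0d by (simp add: power_mult_distrib)
    hence "curve_fun_eval d a (-1) (w*y0) = 0 \<longleftrightarrow> (-1, w*y0) = (-1, y0)" using Z by blast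
    hence "(-1, w*y0) = (-1, y0)" using ev B1 A1 by simp
    hence "w = 1" using y0nz by simp
    with w show False by simp
  qed
  hence Bnz: "B \<noteq> 0" by auto
  define Q where "Q = A^d - (-B)^d * f"
  have Qroot: "x = -1" if "poly Q x = 0" for x
  proof (cases "poly B x = 0")
    case True
    hence "poly A x ^ d = 0" using that d2 by (simp add: Q_def)
    hence Ax: "poly A x = 0" by simp
    obtain y where y: "y^d = poly f x" using exists_root_pow[OF ac, of d] d2 by auto
    have "curve_fun_eval d a x y = 0 \<longleftrightarrow> (x,y) = (-1,y0)" using Z y by blast
    hence "(x,y) = (-1,y0)" using ev True Ax by simp
    thus ?thesis by simp
  next
    case False
    define y where "y = - poly A x / poly B x"
    have "poly A x ^ d = (- poly B x)^d * poly f x" using that by (simp add: Q_def)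
    hence y: "y^d = poly f x" unfolding y_def using pow_neg_eq False by blast
    have "poly A x + poly B x * y = 0" using False by (simp add: y_def)
    moreover have "curve_fun_eval d a x y = 0 \<longleftrightarrow> (x,y) = (-1,y0)" using Z y by blast
    ultimately have "(x,y) = (-1,y0)" using ev by simp
    thus ?thesis by simp
  qed
  have Qnz: "Q \<noteq> 0" using Qroot[of 0] by auto
  define K where "K = degree Q"
  have Qform: "Q = smult (lead_coeff Q) ([:1,1:]^K)"
    using only_root[OF ac Qnz, of "-1"] Qroot unfolding K_def by simp
  have fnz: "f \<noteq> 0" using degf dn by auto
  have dA: "degree (A^d) = d * degree A" using d2 by (cases "A = 0") (simp_all add: degree_power_eq power_0_left)
  have dB: "degree ((-B)^d * f) = d * degree B + n"
    using Bnz fnz degf by (simp add: degree_mult_eq degree_power_eq)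
  have neq: "d * degree A \<noteq> d * degree B + n"
  proof
    assume "d * degree A = d * degree B + n"
    hence "d dvd n" by (metis dvd_add_right_iff dvd_triv_left)
    with cop d2 show False using coprime_dvd_1 by fastforce
  qed
  have Kmax: "K = max (d * degree A) (d * degree B + n)"
  proof (cases "d * degree A < d * degree B + n")
    case True thus ?thesis unfolding K_def Q_def using deg_diff_right[of "A^d" "(-B)^d * f"] dA dB by simp
  next
    case False thus ?thesis unfolding K_def Q_def using deg_diff_left[of "(-B)^d * f" "A^d"] dA dB neq by simp
  qed
  have wA: "d * degree A \<le> K" and wB: "d * degree B + n \<le> K" using Kmax by auto
  have Kk: "K \<le> k"
  proof (cases "d * degree A < d * degree B + n")
    case True thus ?thesis using Kmax wt[of 1] d2 Bnz unfolding B_def by simp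
  next
    case False
    hence "degree A \<noteq> 0" using dn by (cases "degree A = 0") auto
    hence "A \<noteq> 0" by auto
    thus ?thesis using Kmax False wt[of 0] d2 unfolding A_def by simp
  qed
  have Km: "K < m" using Kk km by simp
  have Kn: "n \<le> K" using wB by simp
  define W where "W = smult c ([:0,1:]^e * A) - B * v"
  have Qeq: "A^d - (-B)^d * f = smult (lead_coeff Q) ([:1,1:]^K)" using Qform unfolding Q_def .
  have dvdW: "[:1,1:]^K dvd W"
    unfolding W_def using core_dvd[OF _ cd Fx Qeq _ B1 v1 hPz gP] d2 Km by simp
  have dBe: "degree B < e"
  proof -
    have "d * degree B < d * e" using wB Km mdef mult.commute[of e d] by linarith
    thus ?thesis by simp
  qed
  have W0: False if "W = 0"
    using core_zero[of c e A B v] that dBe v0 Bnz unfolding W_def by simp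
  have Wsmall: False if "degree W < K"
  proof -
    have "W \<noteq> 0" using W0 by blast
    from dvd_imp_degree_le[OF dvdW this] that show False by (simp add: degree_linear_power)
  qed
  have dW: "degree W \<le> max (e + degree A) (degree B + degree v)" unfolding W_def by (rule degW)
  show False
  proof (cases "e*d < (d-1)*K")
    case True
    have dK: "(d-1)*K + K = d*K" using d2 by (cases d) auto
    have "d * (e + degree A) < d * K"
      using True wA dK by (simp add: algebra_simps)
    hence 1: "e + degree A < K" by simp
    have "d * (degree B + degree v) < d * K"
      using True wB dv mdef dK by (simp add: algebra_simps)
    hence 2: "degree B + degree v < K" by simp
    have "degree W < K" using dW 1 2 by (simp add: max_def split: if_splits)
    thus False by (rule Wsmall)
  next
    case False
    have dd: "d = 2"
    proof (rule ccontr)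
      assume "d \<noteq> 2" hence d3: "3 \<le> d" using d2 by simp
      hence "e*d < n" by (rule big)
      moreover have "2*K \<le> (d-1)*K" using d3 by (intro mult_le_mono1) simp
      ultimately show False using False Kn by linarith
    qed
    have odd_n: "odd n" using cop dd by simp
    have K2: "K \<le> 2*e" using False dd by simp
    have hyp2: "4*e < n + 2*e + 2" using hyp dd by (simp add: algebra_simps)
    have n_eq: "n = 2*e - 1" using odd_n K2 Kn hyp2 by presburger
    have e2: "2 \<le> e" using n_eq dn dd by simp
    have m_eq: "m = 4*e - 1" using mdef n_eq dd by simp
    have degB0: "degree B = 0" using wB K2 n_eq dd e2 by simp
    have dv2: "degree v \<le> 2*e - 1" using dv m_eq dd by simp
    have cd2: "c^2 = - ((-1)^2)" using cd dd by simp
    have Fx2: "[:0,1:]^(e*2) * f = [:1,1:]^m - v^2" using Fx dd by simp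
    have y0d2: "y0^2 = poly f (-1)" using y0d dd by simp
    have Q2: "A^2 - B^2 * f = smult (lead_coeff Q) ([:1,1:]^K)" using Qeq dd by simp
    have A1: "poly A (-1) \<noteq> 0"
    proof
      assume "poly A (-1) = 0"
      hence "poly B (-1) * y0 = 0" using hPz by simp
      thus False using B1 y0nz by simp
    qed
    show False
    proof (cases "K < 2*e")
      case True
      have Ke: "K = 2*e - 1" using True Kn n_eq by simp
      define A' where "A' = A^2 + B^2 * f"
      define B' where "B' = 2 * A * B"
      have "A'^2 - (-B')^2 * f = (A^2 - (-B)^2 * f)^2"
        unfolding A'_def B'_def by (simp add: power2_eq_square algebra_simps)
      also have "\<dots> = smult ((lead_coeff Q)^2) ([:1,1:]^(K*2))"
        using Q2 by (simp add: power_mult smult_power)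
      finally have Q'eq: "A'^2 - (-B')^2 * f = smult ((lead_coeff Q)^2) ([:1,1:]^(K*2))" .
      have B'1: "poly B' (-1) \<noteq> 0" using A1 B1 by (simp add: B'_def)
      have "poly A' (-1) + poly B' (-1) * y0 = (poly A (-1) + poly B (-1) * y0)^2"
        using y0d2 by (simp add: A'_def B'_def power2_eq_square algebra_simps)
      hence hP': "poly A' (-1) + poly B' (-1) * y0 = 0" using hPz by simp
      define W' where "W' = smult c ([:0,1:]^e * A') - B' * v"
      have dvdW': "[:1,1:]^(K*2) dvd W'"
        unfolding W'_def using core_dvd[OF _ cd2 Fx2 Q'eq _ B'1 v1 hP' gP] Ke m_eq by simp
      have dA': "degree A' \<le> K"
      proof -
        have "degree (A^2) \<le> K" using wA dd by (simp add: degree_power_le order_trans[OF degree_power_le])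
        moreover have "degree (B^2 * f) \<le> K"
          using wB dd degf degB0 degree_mult_le[of "B^2" f] degree_power_le[of B 2] by simp
        ultimately show ?thesis unfolding A'_def using degree_add_le by blast
      qed
      have dAe: "degree A \<le> e - 1" using wA dd Ke by simp
      have dB': "degree B' \<le> e - 1"
      proof -
        have "degree B' \<le> degree (2 * A) + degree B" unfolding B'_def by (rule degree_mult_le)
        also have "degree (2 * A) \<le> degree (2::'a poly) + degree A" by (rule degree_mult_le)
        finally show ?thesis using dAe degB0 by simp
      qed
      have "degree W' \<le> max (e + degree A') (degree B' + degree v)" unfolding W'_def by (rule degW)
      hence "degree W' < K*2" using dA' dB' dv2 Ke e2 by (simp add: max_def split: if_splits)
      hence "W' = 0" using dvd_imp_degree_le[OF dvdW'] by (auto simp: degree_linear_power)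
      hence "B' = 0" using core_zero[of c e A' B' v] dB' e2 v0 unfolding W'_def by simp
      thus False using B'1 by simp
    next
      case False
      hence Ke: "K = 2*e" using K2 by simp
      have dAe: "degree A \<le> e" using wA dd Ke by simp
      have dWle: "degree W \<le> 2*e" using dW dAe degB0 dv2 e2 by (simp add: max_def split: if_splits)
      obtain r where r: "W = [:1,1:]^K * r" using dvdW by (elim dvdE)
      have Wnz: "W \<noteq> 0" using W0 by blast
      hence rnz: "r \<noteq> 0" using r by auto
      have "degree W = K + degree r" using r rnz by (simp add: degree_mult_eq degree_linear_power)
      hence "degree r = 0" using dWle Ke by simp
      then obtain \<rho> where rho: "r = [:\<rho>:]" by (metis degree_eq_zeroE)
      have rho0: "\<rho> \<noteq> 0" using rnz rho by simp
      obtain b where b: "B = [:b:]" using degB0 by (metis degree_eq_zeroE)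
      have b0: "b \<noteq> 0" using Bnz b by simp
      define W' where "W' = smult c ([:0,1:]^e * A) + B * v"
      define \<kappa> where "\<kappa> = lead_coeff Q"
      have WW': "W * W' = - ([:1,1:]^K * (smult \<kappa> ([:0,1:]^(e*2)) + B^2 * [:1,1:]^(m - K)))"
      proof -
        have "W * W' = smult (c^2) (([:0,1:]^e)^2 * A^2) - B^2 * v^2"
          unfolding W_def W'_def by (simp add: power2_eq_square algebra_simps)
        also have "\<dots> = - ([:0,1:]^(e*2) * (A^2 - B^2 * f)) - B^2 * ([:0,1:]^(e*2) * f + v^2)"
          using cd2 by (simp add: power_mult algebra_simps)
        also have "\<dots> = - ([:0,1:]^(e*2) * smult \<kappa> ([:1,1:]^K)) - B^2 * [:1,1:]^m"
          using Q2 Fx2 unfolding \<kappa>_def by simp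
        also have "[:1,1:]^m = [:1,1:]^K * [:1,1::'a:]^(m-K)" using Km by (simp add: power_add[symmetric])
        finally show ?thesis by (simp add: algebra_simps)
      qed
      have "[:1,1:]^K * ([:\<rho>:] * W') = [:1,1:]^K * (- (smult \<kappa> ([:0,1:]^(e*2)) + B^2 * [:1,1:]^(m - K)))"
        using WW' r rho by (simp add: algebra_simps)
      moreover have P1K: "[:1,1:]^K \<noteq> (0::'a poly)" by simp
      ultimately have rW': "[:\<rho>:] * W' = - (smult \<kappa> ([:0,1:]^(e*2)) + B^2 * [:1,1:]^(m - K))"
        using mult_left_cancel[OF P1K] by blast
      have rW: "[:\<rho>:] * W = smult (\<rho>^2) ([:1,1:]^K)" using r rho by (simp add: power2_eq_square)
      have "W + W' = 2 * smult c ([:0,1:]^e * A)" unfolding W_def W'_def by simp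
      hence "[:\<rho>:] * W + [:\<rho>:] * W' = [:\<rho>:] * (2 * smult c ([:0,1:]^e * A))"
        by (metis distrib_left)
      hence E: "smult (\<rho>^2) ([:1,1:]^K) - (smult \<kappa> ([:0,1:]^(e*2)) + smult (b^2) ([:1,1:]^(m - K)))
               = [:\<rho>:] * (2 * smult c ([:0,1:]^e * A))"
        unfolding rW rW' b by (simp add: power2_eq_square) (simp add: algebra_simps)
      have Xd: "[:0,0,1:] dvd [:\<rho>:] * (2 * smult c ([:0,1:]^e * A))"
      proof -
        have "[:0,0,1:] dvd [:0,1:]^e * A" using X2_dvd_Xpow[OF e2] by (rule dvd_mult2)
        hence "[:0,0,1:] dvd smult c ([:0,1:]^e * A)" by (rule dvd_smult)
        hence "[:0,0,1:] dvd 2 * smult c ([:0,1:]^e * A)" by (rule dvd_mult)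
        thus ?thesis by (rule dvd_mult)
      qed
      have Xd2: "[:0,0,1:] dvd ([:0,1:]^(e*2) :: 'a poly)" using e2 by (intro X2_dvd_Xpow) simp
      have mK: "m - K = 2*e - 1" using m_eq Ke by simp
      define L where "L = smult (\<rho>^2) ([:1,1:]^K) - (smult \<kappa> ([:0,1:]^(e*2)) + smult (b^2) ([:1,1::'a:]^(m - K)))"
      have L0: "coeff L 0 = 0" "coeff L 1 = 0"
        using coeff_X2_dvd[OF Xd] E unfolding L_def by simp_all
      have pc: "coeff ([:1,1::'a:]^K) 0 = 1" "coeff ([:1,1::'a:]^K) (Suc 0) = of_nat K"
        "coeff ([:1,1::'a:]^(m-K)) 0 = 1" "coeff ([:1,1::'a:]^(m-K)) (Suc 0) = of_nat (m-K)"
        using coeff_P1_pow[of K] coeff_P1_pow[of "m - K"] by auto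
      have c0: "\<rho>^2 - b^2 = 0"
        using L0(1) unfolding L_def by (simp add: pc coeff_X2_dvd(1)[OF Xd2])
      have c1': "\<rho>^2 * of_nat K - b^2 * of_nat (m - K) = 0"
        using L0(2) coeff_X2_dvd(2)[OF Xd2] unfolding L_def One_nat_def by (simp add: pc)
      have c1: "\<rho>^2 * of_nat (2*e) - b^2 * of_nat (2*e - 1) = 0"
        using c1' mK Ke by simp
      have "of_nat (2*e) = (of_nat (2*e - 1) + 1 :: 'a)" using e2 by (simp add: of_nat_diff)
      hence "b^2 = 0" using c0 c1 by (simp add: algebra_simps)
      thus False using b0 by simp
    qed
  qed
qed


theorem proposition6p2:
  fixes v :: "'a::field_char_0 poly" and d n e :: nat
  assumes "alg_closed TYPE('a)"
    and "1 < d" and "d < n" and "coprime n d"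
    and "0 < e"
    and "n + e * d > d * (d * e - 1)"
    and "d * degree v < n + e * d"
    and "\<forall>a. a \<noteq> 0 \<and> poly ([:1, 1:] ^ (n + e * d) - v ^ d) a = 0 \<longrightarrow>
              order a ([:1, 1:] ^ (n + e * d) - v ^ d) = 1"
    and "order 0 ([:1, 1:] ^ (n + e * d) - v ^ d) = e * d \<or>
         order 0 ([:1, 1:] ^ (n + e * d) - v ^ d) = e * d + 1"
  shows "let m = n + e * d; f = ([:1, 1:] ^ m - v ^ d) div [:0, 1:] ^ (e * d) in
           [:0, 1:] ^ (e * d) dvd ([:1, 1:] ^ m - v ^ d) \<and> degree f = n \<and> rsquarefree f \<and>
           (\<exists>y. y ^ d = poly f (-1) \<and> point_order f d (-1, y) m)"
proof -
  define m where "m = n + e * d"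
  define F where "F = [:1,1:]^m - v^d"
  define f where "f = F div [:0,1:]^(e*d)"
  have d2: "2 \<le> d" using assms(2) by simp
  have dv: "d * degree v < m" using assms(7) m_def by simp
  have m0: "2 \<le> m" using m_def assms(3) d2 by simp
  have degvd: "degree (v^d) < m" using degree_power_le[of v d] dv by (simp add: mult.commute)
  have degF: "degree F = m" unfolding F_def
    using deg_diff_left[of "v^d" "[:1,1:]^m"] degvd by (simp add: degree_linear_power)
  have Fnz: "F \<noteq> 0" using degF m0 by auto
  have ordF: "e*d \<le> order 0 F" using assms(9) unfolding m_def F_def by auto
  have Xdvd: "[:0,1:]^(e*d) dvd F" using ordF Fnz order_divides[of 0 "e*d" F] by simp
  have Ff: "F = [:0,1:]^(e*d) * f" unfolding f_def using Xdvd by simp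
  have Fx: "[:0,1:]^(e*d) * f = [:1,1:]^m - v^d" using Ff F_def by simp
  have fnz: "f \<noteq> 0" using Ff Fnz by auto
  have "degree F = e*d + degree f" using Ff fnz by (simp add: degree_mult_eq degree_linear_power)
  hence degf: "degree f = n" using degF m_def by simp
  have polyF: "poly F x = x^(e*d) * poly f x" for x by (subst Ff) simp
  have ord1: "\<forall>a. a \<noteq> 0 \<and> poly F a = 0 \<longrightarrow> order a F = 1" using assms(8) unfolding F_def m_def .
  have v1: "poly v (-1) \<noteq> 0"
  proof
    assume pv: "poly v (-1) = 0"
    hence "[:1,1:] dvd v" using poly_eq_0_iff_dvd[of v "-1"] by simp
    hence "[:1,1:]^d dvd v^d" by (rule dvd_power_same)
    hence "[:1,1:]^2 dvd v^d" using d2 by (meson le_imp_power_dvd dvd_trans)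
    moreover have "[:1,1:]^2 dvd ([:1,1:]^m :: 'a poly)" using m0 by (rule le_imp_power_dvd)
    ultimately have "[:1,1:]^2 dvd F" unfolding F_def by (metis dvd_diff)
    hence "2 \<le> order (-1) F" using Fnz unfolding P1_eq order_divides by simp
    moreover have "poly F (-1) = 0" unfolding F_def using pv m0 d2 by (simp add: power_0_left)
    ultimately show False using ord1 by force
  qed
  have v0: "poly v 0 \<noteq> 0"
  proof -
    have "poly F 0 = 0" using polyF[of 0] assms(2,5) by simp
    hence "poly v 0 ^ d = 1" unfolding F_def by simp
    thus ?thesis using d2 by (cases "poly v 0 = 0") (auto simp: power_0_left)
  qed
  have rsq: "rsquarefree f"
    unfolding rsquarefree_def
  proof (intro conjI allI)
    show "f \<noteq> 0" by (rule fnz)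
    fix a
    have oF: "order a F = order a ([:0,1:]^(e*d)) + order a f" using Ff Fnz order_mult by metis
    show "order a f = 0 \<or> order a f = 1"
    proof (cases "a = 0")
      case True
      have "order 0 ([:0,1:]^(e*d)) = e*d" using order_power_n_n[of 0 "e*d"] by simp
      hence "order 0 F = e*d + order 0 f" using oF True by simp
      moreover have "order 0 F = e * d \<or> order 0 F = e * d + 1" using assms(9) unfolding F_def m_def .
      ultimately show ?thesis using True by auto
    next
      case False
      have o0: "order a ([:0,1:]^(e*d)) = 0" by (rule order_0I) (use False in simp)
      show ?thesis
      proof (cases "poly f a = 0")
        case True
        hence "poly F a = 0" using polyF by simp
        hence "order a F = 1" using ord1 False by blast
        thus ?thesis using oF o0 by simp
      next
        case False thus ?thesis using order_0I by blast
      qed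
    qed
  qed
  obtain c :: 'a where cd: "c^d = - ((-1)^d)"
    using exists_root_pow[OF assms(1), of d "- ((-1)^d)"] d2 by auto
  have c0: "c \<noteq> 0" using cd d2 by (cases "c = 0") (auto simp: power_0_left)
  define y0 where "y0 = - poly v (-1) / (c * (-1)^e)"
  have ce: "c * (-1)^e \<noteq> 0" using c0 by simp
  have gP: "c * (-1)^e * y0 = - poly v (-1)" unfolding y0_def using ce by simp
  have y0nz: "y0 \<noteq> 0" using v1 ce unfolding y0_def by simp
  have y0d: "y0^d = poly f (-1)"
  proof -
    define s :: 'a where "s = ((-1)^e)^d"
    have s0: "s \<noteq> 0" unfolding s_def by simp
    have "poly F (-1) = - (poly v (-1) ^ d)" unfolding F_def using m0 by simp
    moreover have "(-1::'a)^(e*d) = s" unfolding s_def by (simp only: power_mult)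
    ultimately have fF: "s * poly f (-1) = - (poly v (-1) ^ d)" using polyF[of "-1"] by simp
    have "(c * (-1)^e * y0)^d = (- poly v (-1))^d" by (simp only: gP)
    hence cy: "c^d * s * y0^d = (- poly v (-1))^d" unfolding s_def by (simp only: power_mult_distrib)
    from y0d_lemma[OF cd s0 fF cy] show ?thesis .
  qed
  define ag where "ag = (\<lambda>j::nat. if j = 0 then v else if j = 1 then smult c ([:0,1:]^e) else 0)"
  have evg: "curve_fun_eval d ag x y = poly v x + c * x^e * y" for x y
    using curve_eval_two[OF d2, of ag] by (simp add: ag_def)
  have Zg: "\<forall>x y. y^d = poly f x \<longrightarrow> (curve_fun_eval d ag x y = 0 \<longleftrightarrow> (x,y) = (-1,y0))"
  proof (intro allI impI)
    fix x y assume yx: "y^d = poly f x"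
    show "curve_fun_eval d ag x y = 0 \<longleftrightarrow> (x,y) = (-1,y0)"
    proof
      assume "curve_fun_eval d ag x y = 0"
      hence vx: "poly v x = - (c * x^e * y)" using evg by (simp add: eq_neg_iff_add_eq_0)
      have "poly v x ^ d = (- (c * x^e * y))^d" by (simp only: vx)
      also have "\<dots> = (-1)^d * (c * x^e * y)^d" by (rule power_minus)
      also have "\<dots> = (-1)^d * c^d * (x^(e*d) * y^d)" by (simp only: power_mult_distrib power_mult mult.assoc)
      also have "\<dots> = - (x^(e*d) * poly f x)"
      proof (cases "even d")
        case True thus ?thesis using cd yx by simp
      next
        case False thus ?thesis using cd yx by simp
      qed
      also have "x^(e*d) * poly f x = (1 + x)^m - poly v x ^ d"
        using polyF[of x] unfolding F_def by (simp add: add.commute)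
      finally have "(1 + x)^m = 0" by simp
      hence x1: "x = -1" by (simp add: eq_neg_iff_add_eq_0 add.commute)
      hence "poly v (-1) = - (c * (-1)^e * y)" using vx by simp
      hence "c * (-1)^e * y = - poly v (-1)" by (simp only: minus_minus)
      hence "c * (-1)^e * y = c * (-1)^e * y0" using gP by (simp only:)
      hence "y = y0" using ce by simp
      thus "(x,y) = (-1,y0)" using x1 by simp
    next
      assume "(x,y) = (-1,y0)" thus "curve_fun_eval d ag x y = 0" using evg gP by simp
    qed
  qed
  have vnz: "v \<noteq> 0" using v1 by auto
  have Sg: "{d * degree (ag j) + degree f * j |j. j < d \<and> ag j \<noteq> 0} = {d * degree v, d * e + n}"
  proof (rule set_eqI, rule iffI)
    fix z assume "z \<in> {d * degree (ag j) + degree f * j |j. j < d \<and> ag j \<noteq> 0}"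
    then obtain j where j: "z = d * degree (ag j) + degree f * j" "j < d" "ag j \<noteq> 0" by blast
    show "z \<in> {d * degree v, d * e + n}"
      using j degf c0 by (cases "j = 0"; cases "j = 1") (auto simp: ag_def degree_linear_power)
  next
    fix z assume z: "z \<in> {d * degree v, d * e + n}"
    have a0: "ag 0 \<noteq> 0" and a1: "ag 1 \<noteq> 0" using vnz c0 by (auto simp: ag_def)
    have e0: "d * degree v = d * degree (ag 0) + degree f * 0" by (simp add: ag_def)
    have e1: "d * e + n = d * degree (ag 1) + degree f * 1" using c0 degf by (simp add: ag_def degree_linear_power)
    have "d * degree v \<in> {d * degree (ag j) + degree f * j |j. j < d \<and> ag j \<noteq> 0}"
      unfolding mem_Collect_eq by (rule exI[of _ 0]) (use e0 a0 d2 in simp)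
    moreover have "d * e + n \<in> {d * degree (ag j) + degree f * j |j. j < d \<and> ag j \<noteq> 0}"
      unfolding mem_Collect_eq by (rule exI[of _ 1]) (use e1 a1 d2 in simp)
    ultimately have "d * degree v \<in> {d * degree (ag j) + degree f * j |j. j < d \<and> ag j \<noteq> 0}"
        "d * e + n \<in> {d * degree (ag j) + degree f * j |j. j < d \<and> ag j \<noteq> 0}" by blast+
    thus "z \<in> {d * degree (ag j) + degree f * j |j. j < d \<and> ag j \<noteq> 0}" using z by blast
  qed
  have poleg: "pole_order_at_O f d ag = m"
    unfolding pole_order_at_O_def Sg using dv m_def by (simp add: mult.commute)
  have agnz: "\<exists>j<d. ag j \<noteq> 0" using vnz d2 by (intro exI[of _ 0]) (simp add: ag_def)
  have pmm: "principal_multiple f d (-1, y0) m"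
    unfolding principal_multiple_def using agnz poleg Zg by blast
  have minm: "\<not> principal_multiple f d (-1, y0) k" if "0 < k \<and> k < m" for k
    using no_small[OF assms(1) d2 assms(3) assms(4) assms(5) assms(6) m_def Fx degf dv cd v1 v0 gP y0nz y0d]
      that by blast
  have "point_order f d (-1, y0) m" unfolding point_order_def using pmm minm m0 by auto
  hence "\<exists>y. y ^ d = poly f (-1) \<and> point_order f d (-1, y) m" using y0d by blast
  thus ?thesis unfolding Let_def m_def[symmetric] F_def[symmetric] f_def[symmetric]
    using Xdvd degf rsq by blast
qed

end
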